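(* Let $t\in\mathbb{R}$, $\mu>0$, $\sigma>0$ and $\lambda>(\mu-t)_-$. Let $\mathcal{L}_{S,\lambda}(\mu,\sigma)$ be the set of symmetric probability distributions $F$ on $\mathbb{R}$ with $\mathbb{E}^F[X]=\mu$, $\mathbb{E}^F[X^2]=\mu^2+\sigma^2$ and $\mathbb{E}^F[(X-t)_-]\le\lambda$, and let $\mathcal{L}_{6,S,\lambda}(\mu,\sigma)$ be the subset of $\mathcal{L}_{S,\lambda}(\mu,\sigma)$ consisting of six-point distributions. Then \[ \sup_{F\in\mathcal{L}_{S,\lambda}(\mu,\sigma)}\mathbb{E}^F[(X-t)_+^2]=\sup_{F\in\mathcal{L}_{6,S,\lambda}(\mu,\sigma)}\mathbb{E}^F[(X-t)_+^2], \] i.e., the two optimization problems are equivalent.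
   Context: For $x\in\mathbb{R}$, $(x)_+=\max\{x,0\}$, $(x)_-=\max\{-x,0\}$. A $k$-point distribution ($k\ge2$) is the law of a random variable $X$ with $\mathbb{P}(X=x_i)=p_i$, $i=1,\dots,k$, where $0\le p_i<1$ and $\sum_i p_i=1$ (so a $k$-point distribution may have fewer than $k$ atoms). A distribution of $X$ is symmetric if there is $a\in\mathbb{R}$ with $\mathbb{P}(X-a>x)=\mathbb{P}(X-a<-x)$ for all $x\in\mathbb{R}$. *)

theory Defs
  imports "HOL-Probability.Probability"
begin

definition pos_part :: "real \<Rightarrow> real" where "pos_part x = max x 0"
definition neg_part :: "real \<Rightarrow> real" where "neg_part x = max (- x) 0"

definition real_dist :: "real measure \<Rightarrow> bool" where
  "real_dist M \<longleftrightarrow> prob_space M \<and> sets M = sets borel"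

definition symmetric_dist :: "real measure \<Rightarrow> bool" where
  "symmetric_dist M \<longleftrightarrow> (\<exists>a. \<forall>x. measure M {y. y - a > x} = measure M {y. y - a < - x})"

definition k_point_dist :: "nat \<Rightarrow> real measure \<Rightarrow> bool" where
  "k_point_dist k M \<longleftrightarrow> (\<exists>(x::nat \<Rightarrow> real) (p::nat \<Rightarrow> real).
     inj_on x {..<k} \<and> (\<forall>i<k. 0 \<le> p i \<and> p i < 1) \<and> (\<Sum>i<k. p i) = 1 \<and>
     (\<forall>i<k. measure M {x i} = p i))"

definition L_S :: "real \<Rightarrow> real \<Rightarrow> real \<Rightarrow> real \<Rightarrow> real measure set" where
  "L_S t \<mu> \<sigma> lam = {M. real_dist M \<and> symmetric_dist M \<and>
      integrable M (\<lambda>x. x) \<and> integrable M (\<lambda>x. x ^ 2) \<and>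
      (\<integral>x. x \<partial>M) = \<mu> \<and> (\<integral>x. x ^ 2 \<partial>M) = \<mu> ^ 2 + \<sigma> ^ 2 \<and>
      (\<integral>x. neg_part (x - t) \<partial>M) \<le> lam}"

definition L6_S :: "real \<Rightarrow> real \<Rightarrow> real \<Rightarrow> real \<Rightarrow> real measure set" where
  "L6_S t \<mu> \<sigma> lam = {M \<in> L_S t \<mu> \<sigma> lam. k_point_dist 6 M}"

end

theory Submission
  imports Defs
begin


definition pmfG :: "(nat \<Rightarrow> real) \<Rightarrow> nat pmf" where
  "pmfG m = pmf_of_list (map (\<lambda>i. (i, m i)) [0..<6])"

definition mixG :: "(nat \<Rightarrow> real) \<Rightarrow> (nat \<Rightarrow> real) \<Rightarrow> real measure" where
  "mixG m pt = distr (measure_pmf (pmfG m)) borel pt"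

definition wfm :: "(nat \<Rightarrow> real) \<Rightarrow> bool" where
  "wfm m \<longleftrightarrow> (\<forall>i<6. m i \<ge> 0) \<and> (\<Sum>i<6. m i) = 1"

lemma wf_pmfG: "wfm m \<Longrightarrow> pmf_of_list_wf (map (\<lambda>i. (i, m i)) [0..<6])"
  unfolding wfm_def pmf_of_list_wf_def
  by (auto simp: sum_list_sum_nth lessThan_atLeast0)

lemma pmf_pmfG: "wfm m \<Longrightarrow> pmf (pmfG m) i = (if i < 6 then m i else 0)"
  unfolding pmfG_def
  apply (subst pmf_pmf_of_list[OF wf_pmfG], assumption)
  apply (simp add: filter_map o_def sum_list_map_filter')
  apply (cases "i < 6")
   apply (auto simp: upt_rec less_Suc_eq eval_nat_numeral)
  done

lemma set_pmfG: "wfm m \<Longrightarrow> set_pmf (pmfG m) \<subseteq> {..<6}"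
  by (auto simp: set_pmf_eq pmf_pmfG split: if_splits)

lemma meas_pt[measurable]: "pt \<in> measurable (measure_pmf p) borel"
  by simp

lemma integral_mixG:
  fixes f :: "real \<Rightarrow> real"
  assumes "wfm m" "f \<in> borel_measurable borel"
  shows "(\<integral>x. f x \<partial>mixG m pt) = (\<Sum>i<6. m i * f (pt i))"
proof -
  have "(\<integral>x. f x \<partial>mixG m pt) = (\<integral>i. f (pt i) \<partial>measure_pmf (pmfG m))"
    unfolding mixG_def using assms by (simp add: integral_distr)
  also have "\<dots> = (\<Sum>i<6. f (pt i) * pmf (pmfG m) i)"
    using set_pmfG[OF assms(1)] by (intro integral_measure_pmf_real) auto
  finally show ?thesis using assms(1) by (simp add: pmf_pmfG mult.commute)
qed

lemma integrable_mixG: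
  fixes f :: "real \<Rightarrow> real"
  assumes "wfm m" "f \<in> borel_measurable borel"
  shows "integrable (mixG m pt) f"
proof -
  have "integrable (measure_pmf (pmfG m)) (\<lambda>x. f (pt x))"
    using finite_subset[OF set_pmfG[OF assms(1)]] by (intro integrable_measure_pmf_finite) auto
  then show ?thesis unfolding mixG_def
    using integrable_distr_eq[of pt "measure_pmf (pmfG m)" borel f] assms by simp
qed

lemma prob_mixG: "prob_space (mixG m pt)"
  unfolding mixG_def by (intro prob_space.prob_space_distr) (auto simp: prob_space_measure_pmf)

lemma sets_mixG[simp]: "sets (mixG m pt) = sets borel"
  unfolding mixG_def by simp

lemma measure_mixG:
  assumes "wfm m" "A \<in> sets borel"
  shows "measure (mixG m pt) A = (\<Sum>i<6. m i * indicator A (pt i))"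
proof -
  interpret prob_space "mixG m pt" by (rule prob_mixG)
  have "measure (mixG m pt) A = (\<integral>x. indicator A x \<partial>mixG m pt)"
    using assms by simp
  also have "\<dots> = (\<Sum>i<6. m i * indicator A (pt i))"
    using assms by (intro integral_mixG) auto
  finally show ?thesis .
qed



lemma sym_distr:
  assumes rd: "real_dist M" and sd: "symmetric_dist M" and int: "integrable M (\<lambda>x. x)"
    and mu: "(\<integral>x. x \<partial>M) = \<mu>"
  shows "distr M borel (\<lambda>x. 2*\<mu> - x) = M"
proof -
  interpret prob_space M using rd real_dist_def by auto
  have sets: "sets M = sets borel" using rd real_dist_def by auto
  have sp: "space M = UNIV" using sets_eq_imp_space_eq[OF sets] by simp
  interpret rdM: real_distribution M by unfold_locales (use sets in simp)
  obtain a where a: "\<forall>x. measure M {y. y - a > x} = measure M {y. y - a < - x}"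
    using sd symmetric_dist_def by auto
  have meas: "(\<lambda>x::real. 2*a - x) \<in> measurable M borel"
    using measurable_cong_sets[OF sets refl] by simp
  have meas2: "(\<lambda>x::real. 2*\<mu> - x) \<in> measurable M borel"
    using measurable_cong_sets[OF sets refl] by simp
  let ?M' = "distr M borel (\<lambda>x. 2*a - x)"
  have eq: "?M' = M"
  proof (rule cdf_unique)
    interpret p': prob_space ?M' by (rule prob_space_distr[OF meas])
    show "real_distribution ?M'" by unfold_locales simp
    show "real_distribution M" by unfold_locales
    show "cdf ?M' = cdf M"
    proof
      fix x
      have "cdf ?M' x = measure M ((\<lambda>y. 2*a - y) -` {..x} \<inter> space M)"
        unfolding cdf_def using meas by (simp add: measure_distr)
      also have "(\<lambda>y. 2*a - y) -` {..x} \<inter> space M = space M - {y. y < 2*a - x}"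
        by (auto simp: sp)
      also have "measure M (space M - {y. y < 2*a - x}) = 1 - measure M {y. y < 2*a - x}"
        by (rule prob_compl) (simp add: sets)
      also have "{y. y < 2*a - x} = {y. y - a < - (x - a)}" by auto
      also have "measure M \<dots> = measure M {y. y - a > x - a}" using a[rule_format, of "x-a"] by simp
      also have "{y. y - a > x - a} = space M - {..x}" by (auto simp: sp)
      also have "1 - measure M (space M - {..x}) = measure M {..x}"
        using prob_compl[of "{..x}"] by (simp add: sets)
      finally show "cdf ?M' x = cdf M x" unfolding cdf_def .
    qed
  qed
  have "\<mu> = (\<integral>x. x \<partial>?M')" using eq mu by simp
  also have "\<dots> = (\<integral>x. 2*a - x \<partial>M)" using meas by (simp add: integral_distr)
  also have "\<dots> = 2*a - \<mu>" using int mu prob_space sp by simp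
  finally have "a = \<mu>" by simp
  then show ?thesis using eq by simp
qed

lemma noatom:
  assumes rd: "real_dist M" and i1: "integrable M (\<lambda>x. x)" and i2: "integrable M (\<lambda>x. x^2)"
    and e1: "(\<integral>x. x \<partial>M) = \<mu>" and e2: "(\<integral>x. x^2 \<partial>M) = \<mu>^2 + \<sigma>^2" and s: "\<sigma> > 0"
  shows "measure M {z} < 1"
proof (rule ccontr)
  interpret prob_space M using rd real_dist_def by auto
  have sets: "sets M = sets borel" using rd real_dist_def by auto
  have mc: "measurable M borel = measurable borel borel" using measurable_cong_sets[OF sets refl] .
  assume "\<not> measure M {z} < 1"
  then have "prob {z} = 1" using prob_le_1[of "{z}"] by simp
  then have ae: "AE x in M. x \<in> {z}" by (intro AE_prob_1) (simp_all add: sets)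
  have "(\<integral>x. x \<partial>M) = (\<integral>x. z \<partial>M)" using ae by (intro integral_cong_AE) (auto simp: sets mc)
  then have "\<mu> = z" using e1 by (simp add: prob_space)
  have "(\<integral>x. x^2 \<partial>M) = (\<integral>x. z^2 \<partial>M)" using ae by (intro integral_cong_AE) (auto simp: sets mc)
  then have "\<mu>^2 + \<sigma>^2 = z^2" using e2 by (simp add: prob_space)
  with \<open>\<mu> = z\<close> s show False by simp
qed

lemma kpoint_of_finite:
  assumes rd: "real_dist M" and fin: "finite S" and cS: "card S \<le> 6" and mS: "measure M S = 1"
    and na: "\<And>z. measure M {z} < 1"
  shows "k_point_dist 6 M"
proof -
  interpret prob_space M using rd real_dist_def by auto
  have sets: "sets M = sets borel" using rd real_dist_def by auto
  have "infinite (UNIV - S :: real set)" using fin by (simp add: infinite_UNIV_char_0 Diff_infinite_finite)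
  then obtain B where B: "B \<subseteq> UNIV - S" "finite B" "card B = 6 - card S"
    using infinite_arbitrarily_large by blast
  define T where "T = S \<union> B"
  have fT: "finite T" using fin B by (simp add: T_def)
  have cT: "card T = 6" using B fin cS unfolding T_def by (subst card_Un_disjoint) auto
  obtain h where h: "bij_betw h {0..<card T} T" using ex_bij_betw_nat_finite[OF fT] by blast
  then have h6: "bij_betw h {..<6} T" using cT by (simp add: lessThan_atLeast0)
  have "measure M T = (\<Sum>y\<in>T. measure M {y})"
    using fT by (intro finite_measure_eq_sum_singleton) (auto simp: sets)
  also have "\<dots> = (\<Sum>i<6. measure M {h i})"
    using sum.reindex_bij_betw[OF h6, of "\<lambda>y. measure M {y}"] by simp
  finally have sumT: "(\<Sum>i<6. measure M {h i}) = measure M T" ..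
  have "measure M S \<le> measure M T"
    using fT fin by (intro finite_measure_mono) (auto simp: T_def sets intro!: borel_closed finite_imp_closed)
  then have "measure M T = 1" using mS prob_le_1[of T] by simp
  show ?thesis unfolding k_point_dist_def
    apply (rule exI[of _ h], rule exI[of _ "\<lambda>i. measure M {h i}"])
    using h6 sumT \<open>measure M T = 1\<close> na by (auto simp: bij_betw_def)
qed



definition Ib :: "real \<Rightarrow> real \<Rightarrow> real \<Rightarrow> real" where
  "Ib \<mu> c x = (if \<bar>x - \<mu>\<bar> < c then 1 else 0)"
definition Jb :: "real \<Rightarrow> real \<Rightarrow> real \<Rightarrow> real" where
  "Jb \<mu> c x = (if \<bar>x - \<mu>\<bar> < c then 0 else 1)"

lemma Ib_meas[measurable]: "Ib \<mu> c \<in> borel_measurable borel"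
  unfolding Ib_def by measurable
lemma Jb_meas[measurable]: "Jb \<mu> c \<in> borel_measurable borel"
  unfolding Jb_def by measurable

lemma lin5:
  fixes f1 f2 f3 f4 f5 :: "real \<Rightarrow> real"
  assumes "integrable M f1" "integrable M f2" "integrable M f3" "integrable M f4" "integrable M f5"
  shows "(\<integral>x. \<alpha>*f1 x + \<beta>*f2 x + \<gamma>0*f3 x + \<gamma>1*f4 x + \<gamma>2*f5 x \<partial>M)
    = \<alpha>*(\<integral>x. f1 x \<partial>M) + \<beta>*(\<integral>x. f2 x \<partial>M) + \<gamma>0*(\<integral>x. f3 x \<partial>M)
      + \<gamma>1*(\<integral>x. f4 x \<partial>M) + \<gamma>2*(\<integral>x. f5 x \<partial>M)"
  using assms by simp

lemma basis_int:
  assumes rd: "real_dist M" and i1: "integrable M (\<lambda>x. x)" and i2: "integrable M (\<lambda>x. x^2)"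
  shows "integrable M (\<lambda>x. (x-\<mu>)^2)" "integrable M (\<lambda>x. \<bar>x-\<mu>\<bar>)"
    "integrable M (Ib \<mu> c)" "integrable M (Jb \<mu> c)"
    "integrable M (\<lambda>x. (x-\<mu>)^2 * Ib \<mu> c x)" "integrable M (\<lambda>x. (x-\<mu>)^2 * Jb \<mu> c x)"
    "integrable M (\<lambda>x. \<bar>x-\<mu>\<bar> * Jb \<mu> c x)"
proof -
  interpret prob_space M using rd real_dist_def by auto
  have sets: "sets M = sets borel" using rd real_dist_def by auto
  have mc: "measurable M borel = measurable borel borel" using measurable_cong_sets[OF sets refl] .
  have sq: "(\<lambda>x. (x-\<mu>)^2) = (\<lambda>x. x^2 - 2*\<mu>*x + \<mu>^2)" by (auto simp: power2_diff)
  show A: "integrable M (\<lambda>x. (x-\<mu>)^2)" unfolding sq using i1 i2 by simp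
  show B: "integrable M (\<lambda>x. \<bar>x-\<mu>\<bar>)" using i1 by simp
  show C: "integrable M (Ib \<mu> c)"
    by (rule Bochner_Integration.integrable_bound[of _ "\<lambda>_. 1::real"]) (auto simp: mc Ib_def)
  show "integrable M (Jb \<mu> c)"
    by (rule Bochner_Integration.integrable_bound[of _ "\<lambda>_. 1::real"]) (auto simp: mc Jb_def)
  show "integrable M (\<lambda>x. (x-\<mu>)^2 * Ib \<mu> c x)"
    by (rule Bochner_Integration.integrable_bound[OF A]) (auto simp: mc Ib_def)
  show "integrable M (\<lambda>x. (x-\<mu>)^2 * Jb \<mu> c x)"
    by (rule Bochner_Integration.integrable_bound[OF A]) (auto simp: mc Jb_def)
  show "integrable M (\<lambda>x. \<bar>x-\<mu>\<bar> * Jb \<mu> c x)"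
    by (rule Bochner_Integration.integrable_bound[OF B]) (auto simp: mc Jb_def)
qed

lemma scheme_F:
  fixes f :: "real \<Rightarrow> real"
  assumes rd: "real_dist M" and i1: "integrable M (\<lambda>x. x)" and i2: "integrable M (\<lambda>x. x^2)"
    and D: "distr M borel (\<lambda>x. 2*\<mu> - x) = M"
    and fm[measurable]: "f \<in> borel_measurable borel" and fi: "integrable M f"
    and hI: "\<And>x. \<bar>x-\<mu>\<bar> \<le> c \<Longrightarrow> (f x + f (2*\<mu>-x))/2 = \<alpha> + \<beta>*(x-\<mu>)^2"
    and hJ: "\<And>x. \<bar>x-\<mu>\<bar> \<ge> c \<Longrightarrow> (f x + f (2*\<mu>-x))/2 = \<gamma>0 + \<gamma>1*\<bar>x-\<mu>\<bar> + \<gamma>2*(x-\<mu>)^2"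
  shows "(\<integral>x. f x \<partial>M) = \<alpha>*(\<integral>x. Ib \<mu> c x \<partial>M) + \<beta>*(\<integral>x. (x-\<mu>)^2 * Ib \<mu> c x \<partial>M)
     + \<gamma>0*(\<integral>x. Jb \<mu> c x \<partial>M) + \<gamma>1*(\<integral>x. \<bar>x-\<mu>\<bar> * Jb \<mu> c x \<partial>M)
     + \<gamma>2*(\<integral>x. (x-\<mu>)^2 * Jb \<mu> c x \<partial>M)"
proof -
  interpret prob_space M using rd real_dist_def by auto
  have sets: "sets M = sets borel" using rd real_dist_def by auto
  have mc: "measurable M borel = measurable borel borel" using measurable_cong_sets[OF sets refl] .
  have rm: "(\<lambda>x::real. 2*\<mu> - x) \<in> measurable M borel" by (simp add: mc)
  have r: "(\<integral>x. f (2*\<mu>-x) \<partial>M) = (\<integral>x. f x \<partial>M)"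
    using integral_distr[OF rm fm] D by simp
  have ir: "integrable M (\<lambda>x. f (2*\<mu>-x))"
    using integrable_distr_eq[OF rm fm] D fi by simp
  have "(\<integral>x. f x \<partial>M) = (\<integral>x. (f x + f (2*\<mu>-x))/2 \<partial>M)"
    using r fi ir by simp
  also have "\<dots> = (\<integral>x. \<alpha>*Ib \<mu> c x + \<beta>*((x-\<mu>)^2 * Ib \<mu> c x) + \<gamma>0*Jb \<mu> c x
       + \<gamma>1*(\<bar>x-\<mu>\<bar> * Jb \<mu> c x) + \<gamma>2*((x-\<mu>)^2 * Jb \<mu> c x) \<partial>M)"
  proof (rule Bochner_Integration.integral_cong[OF refl])
    fix x
    show "(f x + f (2*\<mu>-x))/2 = \<alpha>*Ib \<mu> c x + \<beta>*((x-\<mu>)^2 * Ib \<mu> c x) + \<gamma>0*Jb \<mu> c x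
       + \<gamma>1*(\<bar>x-\<mu>\<bar> * Jb \<mu> c x) + \<gamma>2*((x-\<mu>)^2 * Jb \<mu> c x)"
      using hI[of x] hJ[of x] by (auto simp: Ib_def Jb_def)
  qed
  also have "\<dots> = \<alpha>*(\<integral>x. Ib \<mu> c x \<partial>M) + \<beta>*(\<integral>x. (x-\<mu>)^2 * Ib \<mu> c x \<partial>M)
     + \<gamma>0*(\<integral>x. Jb \<mu> c x \<partial>M) + \<gamma>1*(\<integral>x. \<bar>x-\<mu>\<bar> * Jb \<mu> c x \<partial>M)
     + \<gamma>2*(\<integral>x. (x-\<mu>)^2 * Jb \<mu> c x \<partial>M)"
    by (rule lin5) (use basis_int[OF rd i1 i2] in auto)
  finally show ?thesis .
qed

lemma scheme_G:
  fixes f :: "real \<Rightarrow> real"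
  assumes wf: "wfm m" and mdef: "m = (\<lambda>i. [q/2,q/2,pc/2,pc/2,pw/2,pw/2]!i)"
    and ptdef: "pt = (\<lambda>i. [\<mu>+a, \<mu>-a, \<mu>+c, \<mu>-c, \<mu>+w, \<mu>-w]!i)"
    and a0: "0 \<le> a" and ac: "a \<le> c" and cw: "c \<le> w"
    and fm[measurable]: "f \<in> borel_measurable borel"
    and hI: "\<And>x. \<bar>x-\<mu>\<bar> \<le> c \<Longrightarrow> (f x + f (2*\<mu>-x))/2 = \<alpha> + \<beta>*(x-\<mu>)^2"
    and hJ: "\<And>x. \<bar>x-\<mu>\<bar> \<ge> c \<Longrightarrow> (f x + f (2*\<mu>-x))/2 = \<gamma>0 + \<gamma>1*\<bar>x-\<mu>\<bar> + \<gamma>2*(x-\<mu>)^2"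
    and eA: "q*a^2 = A" and eB: "pc*c^2 + pw*w^2 = B" and eC: "pc*c + pw*w = C" and eP: "pc + pw = p"
  shows "(\<integral>x. f x \<partial>mixG m pt) = \<alpha>*q + \<beta>*A + \<gamma>0*p + \<gamma>1*C + \<gamma>2*B"
proof -
  have c0: "0 \<le> c" using a0 ac by simp
  have e1: "f (\<mu>+a) + f (\<mu>-a) = 2*(\<alpha> + \<beta>*a^2)" using hI[of "\<mu>+a"] a0 ac by simp
  have e2: "f (\<mu>+c) + f (\<mu>-c) = 2*(\<gamma>0 + \<gamma>1*c + \<gamma>2*c^2)" using hJ[of "\<mu>+c"] c0 by simp
  have e3: "f (\<mu>+w) + f (\<mu>-w) = 2*(\<gamma>0 + \<gamma>1*w + \<gamma>2*w^2)" using hJ[of "\<mu>+w"] c0 cw by simp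
  have "(\<integral>x. f x \<partial>mixG m pt) = (\<Sum>i<6. m i * f (pt i))" by (rule integral_mixG[OF wf fm])
  also have "\<dots> = q/2*(f (\<mu>+a) + f (\<mu>-a)) + pc/2*(f (\<mu>+c) + f (\<mu>-c)) + pw/2*(f (\<mu>+w) + f (\<mu>-w))"
    unfolding mdef ptdef by (simp add: eval_nat_numeral algebra_simps)
  also have "\<dots> = q*(\<alpha> + \<beta>*a^2) + pc*(\<gamma>0 + \<gamma>1*c + \<gamma>2*c^2) + pw*(\<gamma>0 + \<gamma>1*w + \<gamma>2*w^2)"
    unfolding e1 e2 e3 by (simp add: algebra_simps)
  also have "\<dots> = \<alpha>*q + \<beta>*(q*a^2) + \<gamma>0*(pc+pw) + \<gamma>1*(pc*c + pw*w) + \<gamma>2*(pc*c^2 + pw*w^2)"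
    by (simp add: algebra_simps)
  finally show ?thesis unfolding eA eB eC eP .
qed



lemma P3I0:
  fixes y s :: real
  assumes "\<bar>y\<bar> \<le> \<bar>s\<bar>"
  shows "((pos_part (y - s))^2 + (pos_part (-y - s))^2)/2
     = (if s \<ge> 0 then 0 else s^2) + (if s \<ge> 0 then 0 else 1)*y^2"
proof (cases "s \<ge> 0")
  case True
  then have "pos_part (y - s) = 0" "pos_part (-y-s) = 0" using assms by (auto simp: pos_part_def)
  then show ?thesis using True by simp
next
  case False
  then have "pos_part (y - s) = y - s" "pos_part (-y-s) = -y-s" using assms by (auto simp: pos_part_def)
  note h = this
  show ?thesis unfolding h using False by (simp add: power2_eq_square field_simps)
qed

lemma P3J0:
  fixes y s :: real
  assumes "\<bar>y\<bar> \<ge> \<bar>s\<bar>"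
  shows "((pos_part (y - s))^2 + (pos_part (-y - s))^2)/2
     = s^2/2 + (-s)*\<bar>y\<bar> + (1/2)*y^2"
proof (cases "y \<ge> 0")
  case True
  then have "pos_part (y - s) = y - s" "pos_part (-y-s) = 0" using assms by (auto simp: pos_part_def)
  note h = this
  show ?thesis unfolding h using True by (simp add: power2_eq_square field_simps)
next
  case False
  then have "pos_part (y - s) = 0" "pos_part (-y-s) = -y-s" using assms by (auto simp: pos_part_def)
  note h = this
  show ?thesis unfolding h using False by (simp add: power2_eq_square field_simps)
qed

lemma P4I0:
  fixes y s :: real
  assumes "\<bar>y\<bar> \<le> \<bar>s\<bar>"
  shows "(neg_part (y - s) + neg_part (-y - s))/2 = max s 0 + 0*y^2"
  using assms unfolding neg_part_def by (cases "s \<ge> 0"; cases "y \<ge> 0") (auto simp: max_def)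

lemma P4J0:
  fixes y s :: real
  assumes "\<bar>y\<bar> \<ge> \<bar>s\<bar>"
  shows "(neg_part (y - s) + neg_part (-y - s))/2 = s/2 + (1/2)*\<bar>y\<bar> + 0*y^2"
  using assms unfolding neg_part_def by (cases "s \<ge> 0"; cases "y \<ge> 0") (auto simp: max_def)

lemma P3I:
  fixes x t \<mu> :: real
  assumes "\<bar>x-\<mu>\<bar> \<le> \<bar>t-\<mu>\<bar>"
  shows "((pos_part (x - t))^2 + (pos_part ((2*\<mu>-x) - t))^2)/2
     = (if t-\<mu> \<ge> 0 then 0 else (t-\<mu>)^2) + (if t-\<mu> \<ge> 0 then 0 else 1)*(x-\<mu>)^2"
  using P3I0[OF assms] by (simp add: algebra_simps)

lemma P3J:
  fixes x t \<mu> :: real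
  assumes "\<bar>x-\<mu>\<bar> \<ge> \<bar>t-\<mu>\<bar>"
  shows "((pos_part (x - t))^2 + (pos_part ((2*\<mu>-x) - t))^2)/2
     = (t-\<mu>)^2/2 + (-(t-\<mu>))*\<bar>x-\<mu>\<bar> + (1/2)*(x-\<mu>)^2"
  using P3J0[OF assms] by (simp add: algebra_simps)

lemma P4I:
  fixes x t \<mu> :: real
  assumes "\<bar>x-\<mu>\<bar> \<le> \<bar>t-\<mu>\<bar>"
  shows "(neg_part (x - t) + neg_part ((2*\<mu>-x) - t))/2 = max (t-\<mu>) 0 + 0*(x-\<mu>)^2"
  using P4I0[OF assms] by (simp add: algebra_simps)

lemma P4J:
  fixes x t \<mu> :: real
  assumes "\<bar>x-\<mu>\<bar> \<ge> \<bar>t-\<mu>\<bar>"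
  shows "(neg_part (x - t) + neg_part ((2*\<mu>-x) - t))/2 = (t-\<mu>)/2 + (1/2)*\<bar>x-\<mu>\<bar> + 0*(x-\<mu>)^2"
  using P4J0[OF assms] by (simp add: algebra_simps)

lemma P1: "((x::real) + (2*\<mu>-x))/2 = \<mu> + 0*(x-\<mu>)^2"
  "((x::real) + (2*\<mu>-x))/2 = \<mu> + 0*\<bar>x-\<mu>\<bar> + 0*(x-\<mu>)^2" by simp_all

lemma P2: "((x::real)^2 + (2*\<mu>-x)^2)/2 = \<mu>^2 + 1*(x-\<mu>)^2"
  "((x::real)^2 + (2*\<mu>-x)^2)/2 = \<mu>^2 + 0*\<bar>x-\<mu>\<bar> + 1*(x-\<mu>)^2"
  by (simp_all add: power2_eq_square field_simps)



lemma Jsq_expand: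
  assumes rd: "real_dist M" and i1: "integrable M (\<lambda>x. x)" and i2: "integrable M (\<lambda>x. x^2)"
  shows "(\<integral>x. (\<bar>x-\<mu>\<bar> - r)^2 * Jb \<mu> c x \<partial>M)
    = (\<integral>x. (x-\<mu>)^2 * Jb \<mu> c x \<partial>M) - 2*r*(\<integral>x. \<bar>x-\<mu>\<bar> * Jb \<mu> c x \<partial>M) + r^2*(\<integral>x. Jb \<mu> c x \<partial>M)"
proof -
  have "(\<integral>x. (\<bar>x-\<mu>\<bar> - r)^2 * Jb \<mu> c x \<partial>M)
     = (\<integral>x. 0*Ib \<mu> c x + 0*((x-\<mu>)^2 * Ib \<mu> c x) + r^2*Jb \<mu> c x
       + (-2*r)*(\<bar>x-\<mu>\<bar> * Jb \<mu> c x) + 1*((x-\<mu>)^2 * Jb \<mu> c x) \<partial>M)"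
    by (rule Bochner_Integration.integral_cong[OF refl])
       (simp add: power2_eq_square algebra_simps abs_mult_self_eq)
  also have "\<dots> = 0*(\<integral>x. Ib \<mu> c x \<partial>M) + 0*(\<integral>x. (x-\<mu>)^2 * Ib \<mu> c x \<partial>M)
     + r^2*(\<integral>x. Jb \<mu> c x \<partial>M) + (-2*r)*(\<integral>x. \<bar>x-\<mu>\<bar> * Jb \<mu> c x \<partial>M)
     + 1*(\<integral>x. (x-\<mu>)^2 * Jb \<mu> c x \<partial>M)"
    by (rule lin5) (use basis_int[OF rd i1 i2] in auto)
  finally show ?thesis by simp
qed

lemma J1_expand:
  assumes rd: "real_dist M" and i1: "integrable M (\<lambda>x. x)" and i2: "integrable M (\<lambda>x. x^2)"
  shows "(\<integral>x. (\<bar>x-\<mu>\<bar> - r) * Jb \<mu> c x \<partial>M)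
    = (\<integral>x. \<bar>x-\<mu>\<bar> * Jb \<mu> c x \<partial>M) - r*(\<integral>x. Jb \<mu> c x \<partial>M)"
proof -
  have "(\<integral>x. (\<bar>x-\<mu>\<bar> - r) * Jb \<mu> c x \<partial>M)
     = (\<integral>x. 0*Ib \<mu> c x + 0*((x-\<mu>)^2 * Ib \<mu> c x) + (-r)*Jb \<mu> c x
       + 1*(\<bar>x-\<mu>\<bar> * Jb \<mu> c x) + 0*((x-\<mu>)^2 * Jb \<mu> c x) \<partial>M)"
    by (rule Bochner_Integration.integral_cong[OF refl]) (simp add: algebra_simps)
  also have "\<dots> = 0*(\<integral>x. Ib \<mu> c x \<partial>M) + 0*(\<integral>x. (x-\<mu>)^2 * Ib \<mu> c x \<partial>M)
     + (-r)*(\<integral>x. Jb \<mu> c x \<partial>M) + 1*(\<integral>x. \<bar>x-\<mu>\<bar> * Jb \<mu> c x \<partial>M)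
     + 0*(\<integral>x. (x-\<mu>)^2 * Jb \<mu> c x \<partial>M)"
    by (rule lin5) (use basis_int[OF rd i1 i2] in auto)
  finally show ?thesis by simp
qed


lemma par_lemma:
  fixes p B C c E d pw pc w :: real
  assumes p0: "0 \<le> p" and c0: "0 \<le> c" and d0: "0 \<le> C - c*p"
    and Q: "\<And>r. 0 \<le> B - 2*r*C + r^2*p"
    and DE: "C - c*p = 0 \<Longrightarrow> B - 2*c*C + c^2*p = 0"
    and Ed: "E = B - 2*c*C + c^2*p" and dd: "d = C - c*p"
    and pwd: "pw = (if d = 0 then 0 else d^2/E)" and pcd: "pc = p - pw"
    and wd: "w = (if d = 0 then c else c + E/d)"
  shows "0 \<le> pw \<and> 0 \<le> pc \<and> c \<le> w \<and> pc*c^2 + pw*w^2 = B \<and> pc*c + pw*w = C \<and> pc + pw = p"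
proof (cases "d = 0")
  case True
  then have "E = 0" using DE Ed dd by simp
  then have "B = c^2*p" using True Ed dd by (simp add: power2_eq_square algebra_simps)
  moreover have "C = c*p" using True dd by simp
  ultimately show ?thesis using True p0 pwd pcd wd by (simp add: power2_eq_square)
next
  case False
  then have dpos: "d > 0" using d0 dd by simp
  have ppos: "p > 0"
  proof (rule ccontr)
    assume "\<not> p > 0"
    then have p00: "p = 0" using p0 by simp
    then have Cd: "C = d" using dd by simp
    have "0 \<le> B - 2*((B+1)/(2*d))*C" using Q[of "(B+1)/(2*d)"] p00 by simp
    also have "\<dots> = -1" using Cd dpos by (simp add: field_simps)
    finally show False by simp
  qed
  have "0 \<le> B - 2*(c + d/p)*C + (c + d/p)^2*p" by (rule Q)
  also have "\<dots> = E - d^2/p" using ppos unfolding Ed dd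
    by (simp add: power2_eq_square field_simps)
  finally have Ed2: "d^2 \<le> p * E" using ppos by (simp add: field_simps)
  have "0 < d^2" using dpos by simp
  then have "0 < p * E" using Ed2 by linarith
  then have Epos: "E > 0" using ppos by (simp add: zero_less_mult_iff)
  have le: "d^2/E \<le> p" using Ed2 Epos by (simp add: divide_le_eq mult.commute)
  have pw: "pw = d^2/E" and w: "w = c + E/d" using False pwd wd by auto
  have Cd: "C = d + c*p" using dd by simp
  have Bd: "B = E + 2*c*d + c^2*p" unfolding Ed dd by (simp add: algebra_simps power2_eq_square)
  have eC: "pc*c + pw*w = C" unfolding pcd pw w Cd using Epos dpos
    by (simp add: field_simps power2_eq_square)
  have eB: "pc*c^2 + pw*w^2 = B" unfolding pcd pw w Bd using Epos dpos
    by (simp add: field_simps power2_eq_square)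
  show ?thesis using eB eC le Epos dpos pcd pw w by simp
qed


lemma sum6: "(\<Sum>i<(6::nat). f i) = f 0 + f 1 + f 2 + f 3 + f 4 + (f 5::real)"
  by (simp add: eval_nat_numeral)

lemma sym_sum:
  fixes A B :: "real set" and q pc pw \<mu> a c w :: real
  assumes key: "\<And>r. indicator A (\<mu>+r) = (indicator B (\<mu>-r) :: real)"
  shows "(\<Sum>i<6. [q/2,q/2,pc/2,pc/2,pw/2,pw/2]!i * indicator A ([\<mu>+a, \<mu>-a, \<mu>+c, \<mu>-c, \<mu>+w, \<mu>-w]!i))
       = (\<Sum>i<6. [q/2,q/2,pc/2,pc/2,pw/2,pw/2]!i * indicator B ([\<mu>+a, \<mu>-a, \<mu>+c, \<mu>-c, \<mu>+w, \<mu>-w]!i))"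
proof -
  have k2: "indicator A (\<mu>-r) = (indicator B (\<mu>+r) :: real)" for r
    using key[of "-r"] by simp
  show ?thesis unfolding sum6 by (simp add: key k2 numeral_eq_Suc algebra_simps)
qed

lemma main_G:
  assumes MS: "M \<in> L_S t \<mu> \<sigma> lam" and sg: "\<sigma> > 0"
  shows "\<exists>G\<in>L6_S t \<mu> \<sigma> lam. (\<integral>x. (pos_part (x - t))^2 \<partial>G) = (\<integral>x. (pos_part (x - t))^2 \<partial>M)"
proof -
  from MS have rd: "real_dist M" and sd: "symmetric_dist M" and i1: "integrable M (\<lambda>x. x)"
    and i2: "integrable M (\<lambda>x. x^2)" and e1: "(\<integral>x. x \<partial>M) = \<mu>"
    and e2: "(\<integral>x. x^2 \<partial>M) = \<mu>^2 + \<sigma>^2" and e3: "(\<integral>x. neg_part (x - t) \<partial>M) \<le> lam"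
    unfolding L_S_def by auto
  interpret prob_space M using rd real_dist_def by auto
  have sets: "sets M = sets borel" using rd real_dist_def by auto
  have mc: "measurable M borel = measurable borel borel" using measurable_cong_sets[OF sets refl] .
  have D: "distr M borel (\<lambda>x. 2*\<mu> - x) = M" by (rule sym_distr[OF rd sd i1 e1])
  define c where "c = \<bar>t - \<mu>\<bar>"
  have c0: "0 \<le> c" by (simp add: c_def)
  define q where "q = (\<integral>x. Ib \<mu> c x \<partial>M)"
  define A where "A = (\<integral>x. (x-\<mu>)^2 * Ib \<mu> c x \<partial>M)"
  define p where "p = (\<integral>x. Jb \<mu> c x \<partial>M)"
  define C where "C = (\<integral>x. \<bar>x-\<mu>\<bar> * Jb \<mu> c x \<partial>M)"
  define B where "B = (\<integral>x. (x-\<mu>)^2 * Jb \<mu> c x \<partial>M)"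
  note bi = basis_int[OF rd i1 i2]
  have q0: "0 \<le> q" unfolding q_def by (rule Bochner_Integration.integral_nonneg) (simp add: Ib_def)
  have p0: "0 \<le> p" unfolding p_def by (rule Bochner_Integration.integral_nonneg) (simp add: Jb_def)
  have "q + p = (\<integral>x. Ib \<mu> c x + Jb \<mu> c x \<partial>M)" using bi by (simp add: q_def p_def)
  also have "\<dots> = (\<integral>x. 1 \<partial>M)"
    by (rule Bochner_Integration.integral_cong) (auto simp: Ib_def Jb_def)
  also have "\<dots> = 1" using prob_space by simp
  finally have qp: "q + p = 1" .
  have A0: "0 \<le> A" unfolding A_def by (rule Bochner_Integration.integral_nonneg) (simp add: Ib_def)
  have "A \<le> (\<integral>x. c^2 * Ib \<mu> c x \<partial>M)" unfolding A_def
  proof (rule integral_mono)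
    show "integrable M (\<lambda>x. c^2 * Ib \<mu> c x)" using bi by simp
    fix x
    have "\<bar>x-\<mu>\<bar> < c \<Longrightarrow> (x-\<mu>)^2 \<le> c^2" using c0 by (simp add: abs_le_square_iff[symmetric])
    then show "(x-\<mu>)^2 * Ib \<mu> c x \<le> c^2 * Ib \<mu> c x" by (simp add: Ib_def)
  qed (use bi in simp)
  then have Aq: "A \<le> c^2 * q" by (simp add: q_def)
  have d0: "0 \<le> C - c*p"
  proof -
    have "0 \<le> (\<integral>x. (\<bar>x-\<mu>\<bar> - c) * Jb \<mu> c x \<partial>M)"
      by (rule Bochner_Integration.integral_nonneg) (simp add: Jb_def)
    then show ?thesis using J1_expand[OF rd i1 i2, of \<mu> c c] by (simp add: C_def p_def)
  qed
  have Q: "0 \<le> B - 2*r*C + r^2*p" for r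
  proof -
    have "0 \<le> (\<integral>x. (\<bar>x-\<mu>\<bar> - r)^2 * Jb \<mu> c x \<partial>M)"
      by (rule Bochner_Integration.integral_nonneg) (simp add: Jb_def)
    then show ?thesis using Jsq_expand[OF rd i1 i2, of \<mu> r c] by (simp add: B_def C_def p_def)
  qed
  have DE: "B - 2*c*C + c^2*p = 0" if dz: "C - c*p = 0"
  proof -
    have geq: "(\<lambda>x. (\<bar>x-\<mu>\<bar> - c) * Jb \<mu> c x) = (\<lambda>x. \<bar>x-\<mu>\<bar> * Jb \<mu> c x - c * Jb \<mu> c x)"
      by (auto simp: algebra_simps)
    have gi: "integrable M (\<lambda>x. (\<bar>x-\<mu>\<bar> - c) * Jb \<mu> c x)" unfolding geq using bi by simp
    have "(\<integral>x. (\<bar>x-\<mu>\<bar> - c) * Jb \<mu> c x \<partial>M) = 0"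
      using J1_expand[OF rd i1 i2, of \<mu> c c] dz by (simp add: C_def p_def)
    then have "AE x in M. (\<bar>x-\<mu>\<bar> - c) * Jb \<mu> c x = 0"
      using integral_nonneg_eq_0_iff_AE[OF gi] by (simp add: Jb_def)
    then have "AE x in M. (\<bar>x-\<mu>\<bar> - c)^2 * Jb \<mu> c x = 0"
      by (rule AE_mp) (auto simp: Jb_def split: if_splits)
    then have "(\<integral>x. (\<bar>x-\<mu>\<bar> - c)^2 * Jb \<mu> c x \<partial>M) = 0" by (rule integral_eq_zero_AE)
    then show ?thesis using Jsq_expand[OF rd i1 i2, of \<mu> c c] by (simp add: B_def C_def p_def)
  qed
  define a where "a = (if q = 0 then 0 else sqrt (A/q))"
  define E where "E = B - 2*c*C + c^2*p"
  define d where "d = C - c*p"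
  define pw where "pw = (if d = 0 then 0 else d^2/E)"
  define pc where "pc = p - pw"
  define w where "w = (if d = 0 then c else c + E/d)"
  have a0: "0 \<le> a" unfolding a_def using A0 q0 by simp
  have ac: "a \<le> c"
  proof (cases "q = 0")
    case False
    then have "A/q \<le> c^2" using Aq q0 by (simp add: divide_le_eq)
    then have "sqrt (A/q) \<le> sqrt (c^2)" by (rule real_sqrt_le_mono)
    then show ?thesis using False c0 by (simp add: a_def)
  qed (simp add: a_def c0)
  have eA: "q*a^2 = A"
  proof (cases "q = 0")
    case True then show ?thesis using Aq A0 by (simp add: a_def)
  next
    case False then show ?thesis using A0 q0 by (simp add: a_def)
  qed
  have par: "0 \<le> pw \<and> 0 \<le> pc \<and> c \<le> w \<and> pc*c^2 + pw*w^2 = B \<and> pc*c + pw*w = C \<and> pc + pw = p"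
    by (rule par_lemma[OF p0 c0 d0 Q DE E_def d_def pw_def pc_def w_def])
  define m where "m = (\<lambda>i. [q/2,q/2,pc/2,pc/2,pw/2,pw/2]!i)"
  define pt where "pt = (\<lambda>i. [\<mu>+a, \<mu>-a, \<mu>+c, \<mu>-c, \<mu>+w, \<mu>-w]!i)"
  have wf: "wfm m" unfolding wfm_def m_def
  proof (intro conjI allI impI)
    fix i :: nat assume "i < 6"
    then show "0 \<le> [q/2,q/2,pc/2,pc/2,pw/2,pw/2]!i" using q0 par
      by (auto simp: less_Suc_eq eval_nat_numeral)
  next
    show "(\<Sum>i<6. [q/2,q/2,pc/2,pc/2,pw/2,pw/2]!i) = 1" using qp par
      by (simp add: eval_nat_numeral)
  qed
  define G where "G = mixG m pt"
  have transfer: "(\<integral>x. f x \<partial>G) = (\<integral>x. f x \<partial>M)"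
    if fm: "f \<in> borel_measurable borel" and fi: "integrable M f"
    and hI: "\<And>x. \<bar>x-\<mu>\<bar> \<le> c \<Longrightarrow> (f x + f (2*\<mu>-x))/2 = \<alpha> + \<beta>*(x-\<mu>)^2"
    and hJ: "\<And>x. \<bar>x-\<mu>\<bar> \<ge> c \<Longrightarrow> (f x + f (2*\<mu>-x))/2 = \<gamma>0 + \<gamma>1*\<bar>x-\<mu>\<bar> + \<gamma>2*(x-\<mu>)^2"
    for f :: "real \<Rightarrow> real" and \<alpha> \<beta> \<gamma>0 \<gamma>1 \<gamma>2
  proof -
    have "(\<integral>x. f x \<partial>G) = \<alpha>*q + \<beta>*A + \<gamma>0*p + \<gamma>1*C + \<gamma>2*B"
      unfolding G_def
      by (rule scheme_G[OF wf m_def pt_def a0 ac _ fm hI hJ eA])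
         (use par in auto)
    also have "\<dots> = (\<integral>x. f x \<partial>M)"
      using scheme_F[OF rd i1 i2 D fm fi hI hJ] by (simp add: q_def A_def p_def C_def B_def)
    finally show ?thesis .
  qed
  have mt1: "(\<integral>x. x \<partial>G) = \<mu>"
  proof -
    have "(\<integral>x. x \<partial>G) = (\<integral>x. x \<partial>M)"
    proof (rule transfer[of "\<lambda>x. x" \<mu> 0 \<mu> 0 0])
      show "(\<lambda>x::real. x) \<in> borel_measurable borel" by simp
      show "integrable M (\<lambda>x. x)" by (rule i1)
      show "\<And>x. \<bar>x-\<mu>\<bar> \<le> c \<Longrightarrow> (x + (2*\<mu>-x))/2 = \<mu> + 0*(x-\<mu>)^2" by (rule P1(1))
      show "\<And>x. \<bar>x-\<mu>\<bar> \<ge> c \<Longrightarrow> (x + (2*\<mu>-x))/2 = \<mu> + 0*\<bar>x-\<mu>\<bar> + 0*(x-\<mu>)^2" by (rule P1(2))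
    qed
    then show ?thesis using e1 by simp
  qed
  have mt2: "(\<integral>x. x^2 \<partial>G) = \<mu>^2 + \<sigma>^2"
  proof -
    have "(\<integral>x. x^2 \<partial>G) = (\<integral>x. x^2 \<partial>M)"
    proof (rule transfer[of "\<lambda>x. x^2" "\<mu>^2" 1 "\<mu>^2" 0 1])
      show "(\<lambda>x::real. x^2) \<in> borel_measurable borel" by simp
      show "integrable M (\<lambda>x. x^2)" by (rule i2)
      show "\<And>x. \<bar>x-\<mu>\<bar> \<le> c \<Longrightarrow> (x^2 + (2*\<mu>-x)^2)/2 = \<mu>^2 + 1*(x-\<mu>)^2" by (rule P2(1))
      show "\<And>x. \<bar>x-\<mu>\<bar> \<ge> c \<Longrightarrow> (x^2 + (2*\<mu>-x)^2)/2 = \<mu>^2 + 0*\<bar>x-\<mu>\<bar> + 1*(x-\<mu>)^2" by (rule P2(2))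
    qed
    then show ?thesis using e2 by simp
  qed
  have i3: "integrable M (\<lambda>x. neg_part (x - t))"
  proof (rule Bochner_Integration.integrable_bound[of _ "\<lambda>x. \<bar>x\<bar> + \<bar>t\<bar>"])
    show "integrable M (\<lambda>x. \<bar>x\<bar> + \<bar>t\<bar>)" using i1 by simp
    show "(\<lambda>x. neg_part (x - t)) \<in> borel_measurable M" by (simp add: mc neg_part_def)
    show "AE x in M. norm (neg_part (x - t)) \<le> norm (\<bar>x\<bar> + \<bar>t\<bar>)"
      by (auto simp: neg_part_def)
  qed
  have i4: "integrable M (\<lambda>x. (pos_part (x - t))^2)"
  proof (rule Bochner_Integration.integrable_bound[of _ "\<lambda>x. 2*x^2 + 2*t^2"])
    show "integrable M (\<lambda>x. 2*x^2 + 2*t^2)" using i2 by simp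
    show "(\<lambda>x. (pos_part (x - t))^2) \<in> borel_measurable M" by (simp add: mc pos_part_def)
    have "(pos_part (x - t))^2 \<le> 2*x^2 + 2*t^2" for x
    proof -
      have "(pos_part (x - t))^2 \<le> (x - t)^2"
        by (auto simp: pos_part_def max_def abs_le_square_iff[symmetric])
      also have "\<dots> \<le> 2*x^2 + 2*t^2" using sum_squares_ge_zero[of "x+t" 0]
        by (simp add: power2_eq_square algebra_simps)
      finally show ?thesis .
    qed
    then show "AE x in M. norm ((pos_part (x - t))^2) \<le> norm (2*x^2 + 2*t^2)"
      by auto
  qed
  have mt3: "(\<integral>x. neg_part (x - t) \<partial>G) = (\<integral>x. neg_part (x - t) \<partial>M)"
  proof (rule transfer[of "\<lambda>x. neg_part (x - t)" "max (t-\<mu>) 0" 0 "(t-\<mu>)/2" "1/2" 0])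
    show "(\<lambda>x. neg_part (x - t)) \<in> borel_measurable borel" by (simp add: neg_part_def)
    show "integrable M (\<lambda>x. neg_part (x - t))" by (rule i3)
    show "\<And>x. \<bar>x-\<mu>\<bar> \<le> c \<Longrightarrow> (neg_part (x - t) + neg_part ((2*\<mu>-x) - t))/2 = max (t-\<mu>) 0 + 0*(x-\<mu>)^2"
      unfolding c_def by (rule P4I)
    show "\<And>x. \<bar>x-\<mu>\<bar> \<ge> c \<Longrightarrow> (neg_part (x - t) + neg_part ((2*\<mu>-x) - t))/2 = (t-\<mu>)/2 + (1/2)*\<bar>x-\<mu>\<bar> + 0*(x-\<mu>)^2"
      unfolding c_def by (rule P4J)
  qed
  have mt4: "(\<integral>x. (pos_part (x - t))^2 \<partial>G) = (\<integral>x. (pos_part (x - t))^2 \<partial>M)"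
  proof (rule transfer[of "\<lambda>x. (pos_part (x - t))^2" "if t-\<mu> \<ge> 0 then 0 else (t-\<mu>)^2" "if t-\<mu> \<ge> 0 then 0 else 1"
          "(t-\<mu>)^2/2" "-(t-\<mu>)" "1/2"])
    show "(\<lambda>x. (pos_part (x - t))^2) \<in> borel_measurable borel" by (simp add: pos_part_def)
    show "integrable M (\<lambda>x. (pos_part (x - t))^2)" by (rule i4)
    show "\<And>x. \<bar>x-\<mu>\<bar> \<le> c \<Longrightarrow> ((pos_part (x - t))^2 + (pos_part ((2*\<mu>-x) - t))^2)/2
     = (if t-\<mu> \<ge> 0 then 0 else (t-\<mu>)^2) + (if t-\<mu> \<ge> 0 then 0 else 1)*(x-\<mu>)^2"
      unfolding c_def by (rule P3I)
    show "\<And>x. \<bar>x-\<mu>\<bar> \<ge> c \<Longrightarrow> ((pos_part (x - t))^2 + (pos_part ((2*\<mu>-x) - t))^2)/2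
     = (t-\<mu>)^2/2 + (-(t-\<mu>))*\<bar>x-\<mu>\<bar> + (1/2)*(x-\<mu>)^2"
      unfolding c_def by (rule P3J)
  qed
  have rdG: "real_dist G" unfolding real_dist_def G_def by (simp add: prob_mixG)
  have symG: "symmetric_dist G" unfolding symmetric_dist_def
  proof (intro exI allI)
    fix x
    have "{y. y - \<mu> > x} = {x+\<mu><..}" by auto
    then have s1: "{y. y - \<mu> > x} \<in> sets borel" by simp
    have "{y. y - \<mu> < -x} = {..<\<mu>-x}" by auto
    then have s2: "{y. y - \<mu> < -x} \<in> sets borel" by simp
    show "measure G {y. y - \<mu> > x} = measure G {y. y - \<mu> < -x}"
      unfolding G_def measure_mixG[OF wf s1] measure_mixG[OF wf s2]
      unfolding m_def pt_def
      by (rule sym_sum) (simp add: indicator_def)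
  qed
  have gi1: "integrable G (\<lambda>x. x)" unfolding G_def by (rule integrable_mixG[OF wf]) simp
  have gi2: "integrable G (\<lambda>x. x^2)" unfolding G_def by (rule integrable_mixG[OF wf]) simp
  have kp: "k_point_dist 6 G"
  proof (rule kpoint_of_finite[OF rdG, of "pt ` {..<6}"])
    show "finite (pt ` {..<6})" by simp
    show "card (pt ` {..<6}) \<le> 6" using card_image_le[of "{..<6::nat}" pt] by simp
    have sb: "pt ` {..<6} \<in> sets borel" by (intro borel_closed finite_imp_closed) simp
    show "measure G (pt ` {..<6}) = 1"
      unfolding G_def measure_mixG[OF wf sb] using wf by (simp add: wfm_def)
    show "\<And>z. measure G {z} < 1" by (rule noatom[OF rdG gi1 gi2 mt1 mt2 sg])
  qed
  have "G \<in> L6_S t \<mu> \<sigma> lam"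
    unfolding L6_S_def L_S_def using rdG symG gi1 gi2 mt1 mt2 mt3 e3 kp by simp
  then show ?thesis using mt4 by blast
qed


theorem lemma2:
  fixes t \<mu> \<sigma> lam :: real
  assumes "\<mu> > 0" and "\<sigma> > 0" and "lam > neg_part (\<mu> - t)"
  shows "(SUP M \<in> L_S t \<mu> \<sigma> lam. ereal (\<integral>x. (pos_part (x - t)) ^ 2 \<partial>M))
       = (SUP M \<in> L6_S t \<mu> \<sigma> lam. ereal (\<integral>x. (pos_part (x - t)) ^ 2 \<partial>M))"
proof (rule antisym)
  show "(SUP M \<in> L_S t \<mu> \<sigma> lam. ereal (\<integral>x. (pos_part (x - t)) ^ 2 \<partial>M))
       \<le> (SUP M \<in> L6_S t \<mu> \<sigma> lam. ereal (\<integral>x. (pos_part (x - t)) ^ 2 \<partial>M))"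
  proof (rule SUP_least)
    fix M assume "M \<in> L_S t \<mu> \<sigma> lam"
    then obtain G where G: "G \<in> L6_S t \<mu> \<sigma> lam"
      and eq: "(\<integral>x. (pos_part (x - t))^2 \<partial>G) = (\<integral>x. (pos_part (x - t))^2 \<partial>M)"
      using main_G assms(2) by blast
    have "ereal (\<integral>x. (pos_part (x - t))^2 \<partial>G)
       \<le> (SUP M \<in> L6_S t \<mu> \<sigma> lam. ereal (\<integral>x. (pos_part (x - t)) ^ 2 \<partial>M))"
      using G by (rule SUP_upper)
    then show "ereal (\<integral>x. (pos_part (x - t))^2 \<partial>M)
       \<le> (SUP M \<in> L6_S t \<mu> \<sigma> lam. ereal (\<integral>x. (pos_part (x - t)) ^ 2 \<partial>M))"
      using eq by simp
  qed
  show "(SUP M \<in> L6_S t \<mu> \<sigma> lam. ereal (\<integral>x. (pos_part (x - t)) ^ 2 \<partial>M))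
       \<le> (SUP M \<in> L_S t \<mu> \<sigma> lam. ereal (\<integral>x. (pos_part (x - t)) ^ 2 \<partial>M))"
    by (rule SUP_subset_mono) (auto simp: L6_S_def)
qed

end
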